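(* Let $\tau$ be an infinite cardinal, let $(G,X,\alpha)$ be a $G$-space, and suppose $G$ is a (topological) subgroup of a product $\Pi=\prod\{G_s:s\in S\}$ of topological groups. Suppose that either (a) the action $\alpha$ is transitive and $\chi(X)\le\tau$, or (b) $(G,X,\alpha)$ is $G$-Tychonoff, $\mathcal U$ is an equiuniformity on $X$ and $w(\mathcal U)\le\tau$. Then there exist $S'\subset S$ with $|S'|\le\tau$ and an action $\gamma:\mathrm{pr}_{S'}(G)\times X\to X$, where $\mathrm{pr}_{S'}:\Pi\to\prod\{G_s:s\in S'\}$ is the projection and $\mathrm{pr}_{S'}(G)$ carries the subspace topology, such that $(\mathrm{pr}_{S'}(G),X,\gamma)$ is a $G$-space with transitive action $\gamma$ in case (a), respectively $(\mathrm{pr}_{S'}(G),X,\gamma)$ is a $G$-space for which $\mathcal U$ is an equiuniformity in case (b); and $(\mathrm{pr}_{S'}|_G,\mathrm{id}):(G,X,\alpha)\to(\mathrm{pr}_{S'}(G),X,\gamma)$ is an equivariant pair of maps.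
   Context: All spaces are Tychonoff and all maps continuous. A $G$-space $(G,X,\alpha)$ is a topological group $G$ with a continuous action $\alpha:G\times X\to X$; it is transitive if $Gx=X$ for $x\in X$. An equivariant pair of maps $(\varphi,\mathrm{id}):(G,X,\alpha)\to(H,X,\gamma)$ is a continuous homomorphism $\varphi:G\to H$ with $\alpha(g,x)=\gamma(\varphi(g),x)$ for all $g,x$. Uniformities are given by families of open covers; $w(\mathcal U)$ is the minimal cardinality of a base of $\mathcal U$. $\mathcal U$ is an equiuniformity for $(G,X,\alpha)$ if it is saturated ($gu\in\mathcal U$ for all $u\in\mathcal U$, $g\in G$) and bounded (for every $u\in\mathcal U$ there are an open neighborhood $O$ of the unit of $G$ and $v\in\mathcal U$ with $\{OV:V\in v\}$ refining $u$). $(G,X,\alpha)$ is $G$-Tychonoff if there is a compactification $bX$ of $X$ with a continuous $G$-action extending $\alpha$. $\chi(X)$ is the character of $X$. *)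

theory Defs
  imports "HOL-Analysis.Analysis" "HOL-Algebra.Product_Groups"
begin

definition topological_group :: "('g, 'c) monoid_scheme \<Rightarrow> 'g topology \<Rightarrow> bool" where
  "topological_group G T \<longleftrightarrow>
     group G \<and> topspace T = carrier G \<and>
     continuous_map (prod_topology T T) T (\<lambda>p. fst p \<otimes>\<^bsub>G\<^esub> snd p) \<and>
     continuous_map T T (\<lambda>g. inv\<^bsub>G\<^esub> g)"

definition tychonoff_space :: "'x topology \<Rightarrow> bool" where
  "tychonoff_space X \<longleftrightarrow> completely_regular_space X \<and> t1_space X"

definition g_space ::
  "('g, 'c) monoid_scheme \<Rightarrow> 'g topology \<Rightarrow> 'x topology \<Rightarrow> ('g \<Rightarrow> 'x \<Rightarrow> 'x) \<Rightarrow> bool" where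
  "g_space G T X \<alpha> \<longleftrightarrow>
     topological_group G T \<and> tychonoff_space X \<and>
     continuous_map (prod_topology T X) X (\<lambda>p. \<alpha> (fst p) (snd p)) \<and>
     (\<forall>x\<in>topspace X. \<alpha> \<one>\<^bsub>G\<^esub> x = x) \<and>
     (\<forall>g\<in>carrier G. \<forall>h\<in>carrier G. \<forall>x\<in>topspace X. \<alpha> g (\<alpha> h x) = \<alpha> (g \<otimes>\<^bsub>G\<^esub> h) x)"

definition transitive_action ::
  "('g, 'c) monoid_scheme \<Rightarrow> 'x topology \<Rightarrow> ('g \<Rightarrow> 'x \<Rightarrow> 'x) \<Rightarrow> bool" where
  "transitive_action G X \<alpha> \<longleftrightarrow> (\<forall>x\<in>topspace X. (\<lambda>g. \<alpha> g x) ` carrier G = topspace X)"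

text \<open>Equivariant pair of maps (phi, id): continuous homomorphism phi with
  alpha(g,x) = gamma(phi g, x).\<close>
definition equivariant_pair ::
  "('g, 'c) monoid_scheme \<Rightarrow> 'g topology \<Rightarrow> ('h, 'd) monoid_scheme \<Rightarrow> 'h topology \<Rightarrow>
   'x topology \<Rightarrow> ('g \<Rightarrow> 'x \<Rightarrow> 'x) \<Rightarrow> ('h \<Rightarrow> 'x \<Rightarrow> 'x) \<Rightarrow> ('g \<Rightarrow> 'h) \<Rightarrow> bool" where
  "equivariant_pair G TG H TH X \<alpha> \<gamma> \<phi> \<longleftrightarrow>
     \<phi> \<in> hom G H \<and> continuous_map TG TH \<phi> \<and>
     (\<forall>g\<in>carrier G. \<forall>x\<in>topspace X. \<alpha> g x = \<gamma> (\<phi> g) x)"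

definition character_le :: "'x topology \<Rightarrow> 'k set \<Rightarrow> bool" where
  "character_le X K \<longleftrightarrow>
     (\<forall>x\<in>topspace X. \<exists>B. B \<lesssim> K \<and> (\<forall>U\<in>B. openin X U \<and> x \<in> U) \<and>
        (\<forall>W. openin X W \<and> x \<in> W \<longrightarrow> (\<exists>U\<in>B. U \<subseteq> W)))"

definition open_cover :: "'x topology \<Rightarrow> 'x set set \<Rightarrow> bool" where
  "open_cover X u \<longleftrightarrow> (\<forall>U\<in>u. openin X U) \<and> \<Union>u = topspace X"

definition refines :: "'x set set \<Rightarrow> 'x set set \<Rightarrow> bool" where
  "refines v u \<longleftrightarrow> (\<forall>V\<in>v. \<exists>U\<in>u. V \<subseteq> U)"

definition star_of :: "'x set \<Rightarrow> 'x set set \<Rightarrow> 'x set" where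
  "star_of A u = \<Union>{U\<in>u. U \<inter> A \<noteq> {}}"

definition star_refines :: "'x set set \<Rightarrow> 'x set set \<Rightarrow> bool" where
  "star_refines v u \<longleftrightarrow> (\<forall>V\<in>v. \<exists>U\<in>u. star_of V v \<subseteq> U)"

definition uniformity_on :: "'x topology \<Rightarrow> 'x set set set \<Rightarrow> bool" where
  "uniformity_on X \<U> \<longleftrightarrow>
     \<U> \<noteq> {} \<and>
     (\<forall>u\<in>\<U>. open_cover X u) \<and>
     (\<forall>u\<in>\<U>. \<forall>v. open_cover X v \<and> refines u v \<longrightarrow> v \<in> \<U>) \<and>
     (\<forall>u\<in>\<U>. \<forall>v\<in>\<U>. \<exists>w\<in>\<U>. refines w u \<and> refines w v) \<and>
     (\<forall>u\<in>\<U>. \<exists>v\<in>\<U>. star_refines v u) \<and>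
     (\<forall>W x. openin X W \<and> x \<in> W \<longrightarrow> (\<exists>u\<in>\<U>. star_of {x} u \<subseteq> W))"

definition uniformity_weight_le :: "'x set set set \<Rightarrow> 'k set \<Rightarrow> bool" where
  "uniformity_weight_le \<U> K \<longleftrightarrow>
     (\<exists>B\<subseteq>\<U>. B \<lesssim> K \<and> (\<forall>u\<in>\<U>. \<exists>v\<in>B. refines v u))"

definition equiuniformity ::
  "('g, 'c) monoid_scheme \<Rightarrow> 'g topology \<Rightarrow> 'x topology \<Rightarrow> ('g \<Rightarrow> 'x \<Rightarrow> 'x) \<Rightarrow>
   'x set set set \<Rightarrow> bool" where
  "equiuniformity G T X \<alpha> \<U> \<longleftrightarrow>
     uniformity_on X \<U> \<and>
     (\<forall>u\<in>\<U>. \<forall>g\<in>carrier G. (\<lambda>U. \<alpha> g ` U) ` u \<in> \<U>) \<and>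
     (\<forall>u\<in>\<U>. \<exists>N v. openin T N \<and> \<one>\<^bsub>G\<^esub> \<in> N \<and> v \<in> \<U> \<and>
        refines ((\<lambda>V. {\<alpha> g y | g y. g \<in> N \<and> y \<in> V}) ` v) u)"

definition G_tychonoff ::
  "'b itself \<Rightarrow> ('g, 'c) monoid_scheme \<Rightarrow> 'g topology \<Rightarrow> 'x topology \<Rightarrow> ('g \<Rightarrow> 'x \<Rightarrow> 'x) \<Rightarrow> bool"
  where
  "G_tychonoff (_ :: 'b itself) G T X \<alpha> \<longleftrightarrow>
     (\<exists>(K :: 'b topology) (e :: 'x \<Rightarrow> 'b) \<beta>.
        compact_space K \<and> Hausdorff_space K \<and> embedding_map X K e \<and>
        K closure_of (e ` topspace X) = topspace K \<and>
        g_space G T K \<beta> \<and>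
        (\<forall>g\<in>carrier G. \<forall>x\<in>topspace X. \<beta> g (e x) = e (\<alpha> g x)))"

end

theory Submission
  imports Defs
begin

unbundle cardinal_syntax

lemma topgroup_sub_product:
  assumes tg: "\<forall>i\<in>I. topological_group (Gs i) (Ts i)"
    and sg: "subgroup K (product_group I Gs)"
  shows "topological_group ((product_group I Gs)\<lparr>carrier := K\<rparr>) (subtopology (product_topology Ts I) K)"
proof -
  have grp: "\<And>i. i \<in> I \<Longrightarrow> group (Gs i)" using tg by (auto simp: topological_group_def)
  have top: "\<And>i. i \<in> I \<Longrightarrow> topspace (Ts i) = carrier (Gs i)" using tg by (auto simp: topological_group_def)
  have cm: "\<And>i. i \<in> I \<Longrightarrow> continuous_map (prod_topology (Ts i) (Ts i)) (Ts i) (\<lambda>p. fst p \<otimes>\<^bsub>Gs i\<^esub> snd p)"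
    using tg by (auto simp: topological_group_def)
  have ci: "\<And>i. i \<in> I \<Longrightarrow> continuous_map (Ts i) (Ts i) (\<lambda>g. inv\<^bsub>Gs i\<^esub> g)"
    using tg by (auto simp: topological_group_def)
  have gP: "group (product_group I Gs)" using grp by simp
  have Ksub: "K \<subseteq> (\<Pi>\<^sub>E i\<in>I. carrier (Gs i))" using sg subgroup.subset by force
  have tsp: "topspace (subtopology (product_topology Ts I) K) = K"
    using Ksub top by (auto simp: PiE_iff)
  let ?T = "subtopology (product_topology Ts I) K"
  have c1: "continuous_map (prod_topology ?T ?T) (product_topology Ts I) (\<lambda>p. \<lambda>i\<in>I. fst p i \<otimes>\<^bsub>Gs i\<^esub> snd p i)"
    unfolding continuous_map_componentwise
  proof (intro conjI ballI)
    fix k assume k: "k \<in> I"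
    have "continuous_map (prod_topology ?T ?T) (prod_topology (Ts k) (Ts k)) (\<lambda>p. (fst p k, snd p k))"
      unfolding continuous_map_paired
      using k by (auto intro!: continuous_map_compose[OF continuous_map_fst, where g = "\<lambda>x. x k", simplified o_def]
            continuous_map_compose[OF continuous_map_snd, where g = "\<lambda>x. x k", simplified o_def]
            continuous_map_from_subtopology continuous_map_product_projection)
    then have "continuous_map (prod_topology ?T ?T) (Ts k) ((\<lambda>p. fst p \<otimes>\<^bsub>Gs k\<^esub> snd p) \<circ> (\<lambda>p. (fst p k, snd p k)))"
      using cm[OF k] by (rule continuous_map_compose)
    then show "continuous_map (prod_topology ?T ?T) (Ts k) (\<lambda>x. (\<lambda>i\<in>I. fst x i \<otimes>\<^bsub>Gs i\<^esub> snd x i) k)"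
      using k by (simp add: o_def)
  qed auto
  have c2: "continuous_map ?T (product_topology Ts I) (\<lambda>g. \<lambda>i\<in>I. inv\<^bsub>Gs i\<^esub> g i)"
    unfolding continuous_map_componentwise
  proof (intro conjI ballI)
    fix k assume k: "k \<in> I"
    have "continuous_map ?T (Ts k) ((\<lambda>g. inv\<^bsub>Gs k\<^esub> g) \<circ> (\<lambda>g. g k))"
      using k ci[OF k] by (auto intro!: continuous_map_compose continuous_map_from_subtopology continuous_map_product_projection)
    then show "continuous_map ?T (Ts k) (\<lambda>x. (\<lambda>i\<in>I. inv\<^bsub>Gs i\<^esub> x i) k)"
      using k by (simp add: o_def)
  qed auto
  show ?thesis
    unfolding topological_group_def
  proof (intro conjI)
    show "group ((product_group I Gs)\<lparr>carrier := K\<rparr>)"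
      using gP sg by (simp add: group.subgroup_imp_group)
    show "topspace ?T = carrier ((product_group I Gs)\<lparr>carrier := K\<rparr>)" using tsp by simp
    show "continuous_map (prod_topology ?T ?T) ?T (\<lambda>p. fst p \<otimes>\<^bsub>(product_group I Gs)\<lparr>carrier := K\<rparr>\<^esub> snd p)"
      unfolding continuous_map_in_subtopology
    proof
      show "continuous_map (prod_topology ?T ?T) (product_topology Ts I) (\<lambda>p. fst p \<otimes>\<^bsub>(product_group I Gs)\<lparr>carrier := K\<rparr>\<^esub> snd p)"
        using c1 by simp
      show "(\<lambda>p. fst p \<otimes>\<^bsub>(product_group I Gs)\<lparr>carrier := K\<rparr>\<^esub> snd p) \<in> topspace (prod_topology ?T ?T) \<rightarrow> K"
      proof -
        have "\<forall>a\<in>K. \<forall>b\<in>K. a \<otimes>\<^bsub>(product_group I Gs)\<lparr>carrier := K\<rparr>\<^esub> b \<in> K"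
          using sg by (simp add: subgroup.m_closed del: mult_product_group)
        then show ?thesis using tsp by (auto simp del: mult_product_group)
      qed
    qed
    show "continuous_map ?T ?T (\<lambda>g. inv\<^bsub>(product_group I Gs)\<lparr>carrier := K\<rparr>\<^esub> g)"
      unfolding continuous_map_in_subtopology
    proof
      have "\<forall>g\<in>topspace ?T. (\<lambda>i\<in>I. inv\<^bsub>Gs i\<^esub> g i) = inv\<^bsub>(product_group I Gs)\<lparr>carrier := K\<rparr>\<^esub> g"
        using tsp Ksub grp gP sg by (auto simp: group.m_inv_consistent)
      then show "continuous_map ?T (product_topology Ts I) (\<lambda>g. inv\<^bsub>(product_group I Gs)\<lparr>carrier := K\<rparr>\<^esub> g)"
        using c2 continuous_map_eq by blast
      show "(\<lambda>g. inv\<^bsub>(product_group I Gs)\<lparr>carrier := K\<rparr>\<^esub> g) \<in> topspace ?T \<rightarrow> K"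
        using tsp gP sg by (auto simp: group.m_inv_consistent intro: subgroup.m_inv_closed)
    qed
  qed
qed


lemma tg_left:
  assumes "topological_group G T" "c \<in> carrier G"
  shows "continuous_map T T (\<lambda>q. c \<otimes>\<^bsub>G\<^esub> q)"
proof -
  have m: "continuous_map (prod_topology T T) T (\<lambda>p. fst p \<otimes>\<^bsub>G\<^esub> snd p)" and tsp: "topspace T = carrier G"
    using assms by (auto simp: topological_group_def)
  have "continuous_map T (prod_topology T T) (\<lambda>q. (c, q))"
    using assms tsp by (auto intro!: continuous_map_pairedI)
  from continuous_map_compose[OF this m] show ?thesis by (simp add: o_def)
qed

lemma tg_right:
  assumes "topological_group G T" "c \<in> carrier G"
  shows "continuous_map T T (\<lambda>q. q \<otimes>\<^bsub>G\<^esub> c)"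
proof -
  have m: "continuous_map (prod_topology T T) T (\<lambda>p. fst p \<otimes>\<^bsub>G\<^esub> snd p)" and tsp: "topspace T = carrier G"
    using assms by (auto simp: topological_group_def)
  have "continuous_map T (prod_topology T T) (\<lambda>q. (q, c))"
    using assms tsp by (auto intro!: continuous_map_pairedI)
  from continuous_map_compose[OF this m] show ?thesis by (simp add: o_def)
qed

lemma gs_section:
  assumes "g_space G T X \<alpha>" "g \<in> carrier G"
  shows "continuous_map X X (\<alpha> g)"
proof -
  have m: "continuous_map (prod_topology T X) X (\<lambda>p. \<alpha> (fst p) (snd p))" and tsp: "topspace T = carrier G"
    using assms by (auto simp: g_space_def topological_group_def)
  have "continuous_map X (prod_topology T X) (\<lambda>q. (g, q))"
    using assms tsp by (auto intro!: continuous_map_pairedI)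
  from continuous_map_compose[OF this m] show ?thesis by (simp add: o_def)
qed

lemma gs_in:
  assumes "g_space G T X \<alpha>" "g \<in> carrier G" "x \<in> topspace X"
  shows "\<alpha> g x \<in> topspace X"
  using gs_section[OF assms(1,2)] assms(3) by (auto dest: continuous_map_image_subset_topspace)

lemma union_lepoll:
  assumes "infinite T" "I \<lesssim> T" "\<forall>i\<in>I. finite (A i)"
  shows "(\<Union>i\<in>I. A i) \<lesssim> T"
proof -
  have "|I| \<le>o |T|" using assms(2) by (simp add: lepoll_def card_of_ordLeq[symmetric])
  moreover have "\<forall>i\<in>I. |A i| \<le>o |T|"
    using assms by (metis card_of_ordLeq finite_lepoll_infinite lepoll_def)
  ultimately have "|\<Union>i\<in>I. A i| \<le>o |T|"
    using assms(1) card_of_UNION_ordLeq_infinite by blast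
  then show ?thesis by (simp add: lepoll_def card_of_ordLeq[symmetric])
qed

lemma determine:
  assumes tg: "\<forall>i\<in>S. topological_group (Gs i) (Ts i)"
    and sg: "subgroup H (product_group S Gs)"
    and N: "openin (subtopology (product_topology Ts S) H) N" "\<one>\<^bsub>product_group S Gs\<^esub> \<in> N"
  shows "\<exists>F. finite F \<and> F \<subseteq> S \<and> (\<forall>S'. F \<subseteq> S' \<and> S' \<subseteq> S \<longrightarrow>
     (\<exists>Ob. openin (subtopology (product_topology Ts S') ((\<lambda>f. restrict f S') ` H)) Ob \<and>
          restrict (\<one>\<^bsub>product_group S Gs\<^esub>) S' \<in> Ob \<and>
          (\<forall>g\<in>H. restrict g S' \<in> Ob \<longrightarrow> g \<in> N)))"
proof -
  have top: "\<And>i. i \<in> S \<Longrightarrow> topspace (Ts i) = carrier (Gs i)" using tg by (auto simp: topological_group_def)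
  have Hsub: "H \<subseteq> (\<Pi>\<^sub>E i\<in>S. carrier (Gs i))" using subgroup.subset[OF sg] by simp
  obtain N0 where N0: "openin (product_topology Ts S) N0" "N = N0 \<inter> H"
    using N(1) unfolding openin_subtopology by blast
  have "\<one>\<^bsub>product_group S Gs\<^esub> \<in> N0" using N(2) N0(2) by blast
  from product_topology_open_contains_basis[OF N0(1) this]
  obtain Y where Y: "\<one>\<^bsub>product_group S Gs\<^esub> \<in> (\<Pi>\<^sub>E i\<in>S. Y i)" "\<forall>i. openin (Ts i) (Y i)"
      "finite {i. Y i \<noteq> topspace (Ts i)}" "(\<Pi>\<^sub>E i\<in>S. Y i) \<subseteq> N0"
    by (elim exE conjE) (rule that)
  define F where "F = {i\<in>S. Y i \<noteq> topspace (Ts i)}"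
  have "finite F" using Y(3) unfolding F_def by (rule rev_finite_subset) auto
  moreover have "F \<subseteq> S" unfolding F_def by auto
  moreover
  { fix S' assume S': "F \<subseteq> S'" "S' \<subseteq> S"
    define Ob where "Ob = (\<Pi>\<^sub>E i\<in>S'. Y i) \<inter> (\<lambda>f. restrict f S') ` H"
    have "openin (product_topology Ts S') (\<Pi>\<^sub>E i\<in>S'. Y i)"
      using Y by (intro product_topology_basis) auto
    then have "openin (subtopology (product_topology Ts S') ((\<lambda>f. restrict f S') ` H)) Ob"
      unfolding Ob_def openin_subtopology by blast
    moreover have "restrict (\<one>\<^bsub>product_group S Gs\<^esub>) S' \<in> Ob"
    proof -
      have "\<one>\<^bsub>product_group S Gs\<^esub> \<in> H" using sg subgroup.one_closed by blast
      moreover have "restrict (\<one>\<^bsub>product_group S Gs\<^esub>) S' \<in> (\<Pi>\<^sub>E i\<in>S'. Y i)"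
        using Y(1) S'(2) unfolding PiE_iff by auto
      ultimately show ?thesis unfolding Ob_def by blast
    qed
    moreover have "\<forall>g\<in>H. restrict g S' \<in> Ob \<longrightarrow> g \<in> N"
    proof (intro ballI impI)
      fix g assume g: "g \<in> H" "restrict g S' \<in> Ob"
      have "g \<in> (\<Pi>\<^sub>E i\<in>S. Y i)"
      proof -
        have gc: "g \<in> (\<Pi>\<^sub>E i\<in>S. carrier (Gs i))" using g(1) Hsub by blast
        { fix i assume i: "i \<in> S"
          have "g i \<in> Y i"
          proof (cases "i \<in> S'")
            case True
            have "restrict g S' \<in> (\<Pi>\<^sub>E i\<in>S'. Y i)" using g(2) unfolding Ob_def by blast
            then have "restrict g S' i \<in> Y i" using True by (rule PiE_mem)
            then show ?thesis using True by simp
          next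
            case False
            then have "i \<notin> F" using S'(1) by blast
            then have "Y i = topspace (Ts i)" using i unfolding F_def by blast
            moreover have "g i \<in> carrier (Gs i)" using gc i by (rule PiE_mem)
            ultimately show ?thesis using top[OF i] by simp
          qed }
        then show ?thesis using gc by (auto simp: PiE_iff)
      qed
      then have "g \<in> N0" using Y(4) by blast
      then show "g \<in> N" using N0(2) g(1) by blast
    qed
    ultimately have "\<exists>Ob. openin (subtopology (product_topology Ts S') ((\<lambda>f. restrict f S') ` H)) Ob \<and>
          restrict (\<one>\<^bsub>product_group S Gs\<^esub>) S' \<in> Ob \<and>
          (\<forall>g\<in>H. restrict g S' \<in> Ob \<longrightarrow> g \<in> N)" by (intro exI[of _ Ob]) simp }
  ultimately show ?thesis by (intro exI[of _ F]) auto
qed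


declare mult_product_group[simp del] one_product_group[simp del] inv_product_group[simp del]

lemma generic:
  fixes S :: "'s set" and Gs :: "'s \<Rightarrow> ('g, 'c) monoid_scheme" and Ts :: "'s \<Rightarrow> 'g topology"
    and H :: "('s \<Rightarrow> 'g) set" and X :: "'x topology" and \<alpha> :: "('s \<Rightarrow> 'g) \<Rightarrow> 'x \<Rightarrow> 'x"
  assumes tg: "\<forall>s\<in>S. topological_group (Gs s) (Ts s)"
    and sg: "subgroup H (product_group S Gs)"
    and gs: "g_space ((product_group S Gs)\<lparr>carrier := H\<rparr>) (subtopology (product_topology Ts S) H) X \<alpha>"
    and S'S: "S' \<subseteq> S"
    and K: "\<forall>g\<in>H. restrict g S' = restrict (\<one>\<^bsub>product_group S Gs\<^esub>) S' \<longrightarrow> (\<forall>x\<in>topspace X. \<alpha> g x = x)"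
    and C: "\<forall>x\<in>topspace X. \<forall>W. openin X W \<and> x \<in> W \<longrightarrow>
       (\<exists>Ob V. openin (subtopology (product_topology Ts S') ((\<lambda>f. restrict f S') ` H)) Ob \<and>
          restrict (\<one>\<^bsub>product_group S Gs\<^esub>) S' \<in> Ob \<and> openin X V \<and> x \<in> V \<and>
          (\<forall>g\<in>H. restrict g S' \<in> Ob \<longrightarrow> (\<forall>y\<in>V. \<alpha> g y \<in> W)))"
  shows "\<exists>\<gamma>. g_space ((product_group S' Gs)\<lparr>carrier := (\<lambda>f. restrict f S') ` H\<rparr>)
                        (subtopology (product_topology Ts S') ((\<lambda>f. restrict f S') ` H)) X \<gamma> \<and>
               equivariant_pair
                 ((product_group S Gs)\<lparr>carrier := H\<rparr>) (subtopology (product_topology Ts S) H)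
                 ((product_group S' Gs)\<lparr>carrier := (\<lambda>f. restrict f S') ` H\<rparr>)
                 (subtopology (product_topology Ts S') ((\<lambda>f. restrict f S') ` H))
                 X \<alpha> \<gamma> (\<lambda>f. restrict f S') \<and>
               (\<forall>g\<in>H. \<forall>x\<in>topspace X. \<gamma> (restrict g S') x = \<alpha> g x)"
proof -
  let ?P = "product_group S Gs"
  let ?P' = "product_group S' Gs"
  let ?pr = "\<lambda>f. restrict f S'"
  let ?H' = "?pr ` H"
  let ?G = "?P\<lparr>carrier := H\<rparr>"
  let ?G' = "?P'\<lparr>carrier := ?H'\<rparr>"
  let ?T = "subtopology (product_topology Ts S) H"
  let ?T' = "subtopology (product_topology Ts S') ?H'"
  have grp: "\<And>i. i \<in> S \<Longrightarrow> group (Gs i)" using tg by (auto simp: topological_group_def)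
  interpret P: group ?P using grp by simp
  interpret P': group ?P' by (rule product_group) (use grp S'S in auto)
  have Hsub: "H \<subseteq> carrier ?P" using subgroup.subset[OF sg] .
  have prc: "?pr g \<in> carrier ?P'" if "g \<in> carrier ?P" for g
    using that S'S by (auto simp: PiE_iff)
  have prm: "?pr (g \<otimes>\<^bsub>?P\<^esub> h) = ?pr g \<otimes>\<^bsub>?P'\<^esub> ?pr h" for g h
    using S'S by (auto simp: mult_product_group restrict_def fun_eq_iff)
  have pr1: "?pr \<one>\<^bsub>?P\<^esub> = \<one>\<^bsub>?P'\<^esub>"
    using S'S by (auto simp: one_product_group restrict_def fun_eq_iff)
  have hom: "?pr \<in> hom ?P ?P'" using prc prm by (intro homI) auto
  have ghom: "group_hom ?P ?P' ?pr" using hom by (simp add: group_hom_def group_hom_axioms_def P.group_axioms P'.group_axioms)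
  have prinv: "?pr (inv\<^bsub>?P\<^esub> g) = inv\<^bsub>?P'\<^esub> (?pr g)" if "g \<in> carrier ?P" for g
    using group_hom.hom_inv[OF ghom that] .
  have sg': "subgroup ?H' ?P'" using group_hom.subgroup_img_is_subgroup[OF ghom sg] .
  have tg': "topological_group ?G' ?T'"
    using topgroup_sub_product[OF _ sg'] tg S'S by blast
  have tsp': "topspace ?T' = ?H'" using tg' by (simp add: topological_group_def)
  have tsp: "topspace ?T = H" using gs by (simp add: g_space_def topological_group_def)
  have a1: "\<And>x. x \<in> topspace X \<Longrightarrow> \<alpha> \<one>\<^bsub>?P\<^esub> x = x" using gs by (simp add: g_space_def)
  have a2: "\<And>g h x. g \<in> H \<Longrightarrow> h \<in> H \<Longrightarrow> x \<in> topspace X \<Longrightarrow> \<alpha> g (\<alpha> h x) = \<alpha> (g \<otimes>\<^bsub>?P\<^esub> h) x"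
    using gs by (simp add: g_space_def)
  have ain: "\<And>g x. g \<in> H \<Longrightarrow> x \<in> topspace X \<Longrightarrow> \<alpha> g x \<in> topspace X"
    using gs_in[OF gs] by simp
  define \<gamma> where "\<gamma> = (\<lambda>p x. \<alpha> (SOME g. g \<in> H \<and> ?pr g = p) x)"
  have wd: "\<gamma> (?pr g) x = \<alpha> g x" if g: "g \<in> H" and x: "x \<in> topspace X" for g x
  proof -
    define g' where "g' = (SOME g'. g' \<in> H \<and> ?pr g' = ?pr g)"
    have g': "g' \<in> H \<and> ?pr g' = ?pr g" unfolding g'_def by (rule someI[of _ g]) (use g in simp)
    define k where "k = inv\<^bsub>?P\<^esub> g \<otimes>\<^bsub>?P\<^esub> g'"
    have gc: "g \<in> carrier ?P" "g' \<in> carrier ?P" using g g' Hsub by auto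
    have kH: "k \<in> H" unfolding k_def using sg g g' by (simp add: subgroup.m_closed subgroup.m_inv_closed)
    have "?pr k = inv\<^bsub>?P'\<^esub> (?pr g) \<otimes>\<^bsub>?P'\<^esub> ?pr g"
      unfolding k_def prm prinv[OF gc(1)] using g' by simp
    also have "\<dots> = \<one>\<^bsub>?P'\<^esub>" using prc[OF gc(1)] by simp
    finally have "?pr k = ?pr \<one>\<^bsub>?P\<^esub>" using pr1 by simp
    then have ak: "\<alpha> k x = x" using K kH x by blast
    have "g \<otimes>\<^bsub>?P\<^esub> k = g'" unfolding k_def using gc by (metis P.m_assoc P.inv_closed P.r_inv P.l_one)
    then have "\<alpha> g' x = \<alpha> g (\<alpha> k x)" using a2[OF g kH x] by simp
    then show ?thesis using ak unfolding \<gamma>_def g'_def by simp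
  qed
  have cont: "continuous_map (prod_topology ?T' X) X (\<lambda>z. \<gamma> (fst z) (snd z))"
    unfolding continuous_map_def
  proof (intro conjI allI impI)
    show "(\<lambda>z. \<gamma> (fst z) (snd z)) \<in> topspace (prod_topology ?T' X) \<rightarrow> topspace X"
      using wd ain tsp' by auto
    fix W assume W: "openin X W"
    show "openin (prod_topology ?T' X) {z \<in> topspace (prod_topology ?T' X). \<gamma> (fst z) (snd z) \<in> W}"
      unfolding openin_prod_topology_alt
    proof (intro allI impI)
      fix p x assume px: "(p, x) \<in> {z \<in> topspace (prod_topology ?T' X). \<gamma> (fst z) (snd z) \<in> W}"
      then have p: "p \<in> ?H'" and x: "x \<in> topspace X" and pxW: "\<gamma> p x \<in> W" using tsp' by auto
      then obtain g where g: "g \<in> H" and pg: "p = ?pr g" by blast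
      define W' where "W' = {y \<in> topspace X. \<alpha> g y \<in> W}"
      have W'o: "openin X W'" unfolding W'_def
        using openin_continuous_map_preimage[OF gs_section[OF gs] W] g by simp
      have xW': "x \<in> W'" unfolding W'_def using x pxW pg wd[OF g x] by simp
      obtain Ob V where Ob: "openin ?T' Ob" "?pr \<one>\<^bsub>?P\<^esub> \<in> Ob" and V: "openin X V" "x \<in> V"
        and OV: "\<forall>g\<in>H. ?pr g \<in> Ob \<longrightarrow> (\<forall>y\<in>V. \<alpha> g y \<in> W')"
        using C x W'o xW' by meson
      have ipc: "inv\<^bsub>?G'\<^esub> p \<in> carrier ?G'"
      proof (rule group.inv_closed)
        show "group ?G'" using tg' unfolding topological_group_def by blast
        show "p \<in> carrier ?G'" using p by simp
      qed
      define U where "U = {q \<in> topspace ?T'. inv\<^bsub>?G'\<^esub> p \<otimes>\<^bsub>?G'\<^esub> q \<in> Ob}"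
      have Uo: "openin ?T' U" unfolding U_def
        using openin_continuous_map_preimage[OF tg_left[OF tg' ipc] Ob(1)] .
      have invp: "inv\<^bsub>?G'\<^esub> p = ?pr (inv\<^bsub>?P\<^esub> g)"
        using P'.m_inv_consistent[OF sg' p] prinv g Hsub pg by auto
      have pU: "p \<in> U"
      proof -
        have "inv\<^bsub>?G'\<^esub> p \<otimes>\<^bsub>?G'\<^esub> p = ?pr (inv\<^bsub>?P\<^esub> g \<otimes>\<^bsub>?P\<^esub> g)"
          using invp pg prm by simp
        also have "\<dots> = ?pr \<one>\<^bsub>?P\<^esub>" using g Hsub by auto
        finally show ?thesis unfolding U_def using Ob(2) p tsp' by simp
      qed
      have "U \<times> V \<subseteq> {z \<in> topspace (prod_topology ?T' X). \<gamma> (fst z) (snd z) \<in> W}"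
      proof clarify
        fix q y assume q: "q \<in> U" and y: "y \<in> V"
        have yX: "y \<in> topspace X" using openin_subset[OF V(1)] y by blast
        have qH: "q \<in> ?H'" using q tsp' unfolding U_def by blast
        then obtain g' where g': "g' \<in> H" and qg: "q = ?pr g'" by blast
        define k where "k = inv\<^bsub>?P\<^esub> g \<otimes>\<^bsub>?P\<^esub> g'"
        have gc: "g \<in> carrier ?P" "g' \<in> carrier ?P" using g g' Hsub by auto
        have kH: "k \<in> H" unfolding k_def using sg g g' by (simp add: subgroup.m_closed subgroup.m_inv_closed)
        have "?pr k = inv\<^bsub>?G'\<^esub> p \<otimes>\<^bsub>?G'\<^esub> q" unfolding k_def using invp qg prm by simp
        then have "?pr k \<in> Ob" using q unfolding U_def by simp
        then have "\<alpha> k y \<in> W'" using OV kH y by blast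
        then have "\<alpha> g (\<alpha> k y) \<in> W" unfolding W'_def by simp
        moreover have "g \<otimes>\<^bsub>?P\<^esub> k = g'" unfolding k_def using gc by (metis P.m_assoc P.inv_closed P.r_inv P.l_one)
        ultimately have "\<alpha> g' y \<in> W" using a2[OF g kH yX] by simp
        then show "(q, y) \<in> topspace (prod_topology ?T' X) \<and> \<gamma> (fst (q, y)) (snd (q, y)) \<in> W"
          using wd[OF g' yX] qg qH yX tsp' by simp
      qed
      then show "\<exists>U V. openin ?T' U \<and> openin X V \<and> p \<in> U \<and> x \<in> V \<and>
             U \<times> V \<subseteq> {z \<in> topspace (prod_topology ?T' X). \<gamma> (fst z) (snd z) \<in> W}"
        using Uo V pU by blast
    qed
  qed
  have gs': "g_space ?G' ?T' X \<gamma>"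
    unfolding g_space_def
  proof (intro conjI ballI)
    show "topological_group ?G' ?T'" by (rule tg')
    show "tychonoff_space X" using gs by (simp add: g_space_def)
    show "continuous_map (prod_topology ?T' X) X (\<lambda>p. \<gamma> (fst p) (snd p))" by (rule cont)
    fix x assume x: "x \<in> topspace X"
    have "\<one>\<^bsub>?G'\<^esub> = ?pr \<one>\<^bsub>?P\<^esub>" using pr1 by simp
    then show "\<gamma> \<one>\<^bsub>?G'\<^esub> x = x" using wd[OF _ x] a1[OF x] sg subgroup.one_closed by fastforce
  next
    fix p q x assume p: "p \<in> carrier ?G'" and q: "q \<in> carrier ?G'" and x: "x \<in> topspace X"
    obtain g where g: "g \<in> H" and pg: "p = ?pr g" using p by auto
    obtain h where h: "h \<in> H" and qh: "q = ?pr h" using q by auto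
    have gh: "g \<otimes>\<^bsub>?P\<^esub> h \<in> H" using sg g h by (simp add: subgroup.m_closed)
    have "\<gamma> p (\<gamma> q x) = \<alpha> g (\<alpha> h x)" using pg qh wd g h x ain by simp
    also have "\<dots> = \<alpha> (g \<otimes>\<^bsub>?P\<^esub> h) x" using a2 g h x by simp
    also have "\<dots> = \<gamma> (p \<otimes>\<^bsub>?G'\<^esub> q) x" using wd[OF gh x] pg qh prm by simp
    finally show "\<gamma> p (\<gamma> q x) = \<gamma> (p \<otimes>\<^bsub>?G'\<^esub> q) x" .
  qed
  have eq: "equivariant_pair ?G ?T ?G' ?T' X \<alpha> \<gamma> ?pr"
    unfolding equivariant_pair_def
  proof (intro conjI ballI)
    show "?pr \<in> hom ?G ?G'" using prm by (intro homI) auto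
    have "continuous_map ?T (product_topology Ts S') ?pr"
      unfolding continuous_map_componentwise
    proof (intro conjI ballI)
      fix k assume k: "k \<in> S'"
      have "continuous_map ?T (Ts k) (\<lambda>x. x k)"
        using k S'S by (intro continuous_map_from_subtopology continuous_map_product_projection) auto
      then show "continuous_map ?T (Ts k) (\<lambda>x. ?pr x k)" using k by simp
    qed auto
    then show "continuous_map ?T ?T' ?pr"
      unfolding continuous_map_in_subtopology using tsp by auto
    fix g x assume "g \<in> carrier ?G" "x \<in> topspace X"
    then show "\<alpha> g x = \<gamma> (?pr g) x" using wd by simp
  qed
  show ?thesis using gs' eq wd by blast
qed


lemma pr_basic:
  fixes S :: "'s set" and Gs :: "'s \<Rightarrow> ('g, 'c) monoid_scheme" and Ts :: "'s \<Rightarrow> 'g topology"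
    and H :: "('s \<Rightarrow> 'g) set"
  assumes tg: "\<forall>s\<in>S. topological_group (Gs s) (Ts s)"
    and sg: "subgroup H (product_group S Gs)"
    and S'S: "S' \<subseteq> S"
  shows "group (product_group S Gs)" "group (product_group S' Gs)"
    "\<And>g h. restrict (g \<otimes>\<^bsub>product_group S Gs\<^esub> h) S' = restrict g S' \<otimes>\<^bsub>product_group S' Gs\<^esub> restrict h S'"
    "restrict \<one>\<^bsub>product_group S Gs\<^esub> S' = \<one>\<^bsub>product_group S' Gs\<^esub>"
    "\<And>g. g \<in> carrier (product_group S Gs) \<Longrightarrow> restrict (inv\<^bsub>product_group S Gs\<^esub> g) S' = inv\<^bsub>product_group S' Gs\<^esub> (restrict g S')"
    "subgroup ((\<lambda>f. restrict f S') ` H) (product_group S' Gs)"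
    "topological_group ((product_group S' Gs)\<lparr>carrier := (\<lambda>f. restrict f S') ` H\<rparr>) (subtopology (product_topology Ts S') ((\<lambda>f. restrict f S') ` H))"
proof -
  let ?P = "product_group S Gs"
  let ?P' = "product_group S' Gs"
  let ?pr = "\<lambda>f. restrict f S'"
  have grp: "\<And>i. i \<in> S \<Longrightarrow> group (Gs i)" using tg by (auto simp: topological_group_def)
  show gP: "group ?P" using grp by (rule product_group)
  show gP': "group ?P'" by (rule product_group) (use grp S'S in auto)
  have prc: "?pr g \<in> carrier ?P'" if "g \<in> carrier ?P" for g
    using that S'S by (auto simp: PiE_iff)
  show prm: "\<And>g h. ?pr (g \<otimes>\<^bsub>?P\<^esub> h) = ?pr g \<otimes>\<^bsub>?P'\<^esub> ?pr h"
    using S'S by (auto simp: mult_product_group restrict_def fun_eq_iff)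
  show "?pr \<one>\<^bsub>?P\<^esub> = \<one>\<^bsub>?P'\<^esub>"
    using S'S by (auto simp: one_product_group restrict_def fun_eq_iff)
  have hom: "?pr \<in> hom ?P ?P'" using prc prm by (intro homI) auto
  have ghom: "group_hom ?P ?P' ?pr" using hom gP gP' by (simp add: group_hom_def group_hom_axioms_def)
  show "\<And>g. g \<in> carrier ?P \<Longrightarrow> ?pr (inv\<^bsub>?P\<^esub> g) = inv\<^bsub>?P'\<^esub> (?pr g)"
    using group_hom.hom_inv[OF ghom] by blast
  show sg': "subgroup (?pr ` H) ?P'" using group_hom.subgroup_img_is_subgroup[OF ghom sg] .
  show "topological_group (?P'\<lparr>carrier := ?pr ` H\<rparr>) (subtopology (product_topology Ts S') (?pr ` H))"
    using topgroup_sub_product[OF _ sg'] tg S'S by blast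
qed

lemma CK:
  assumes gs: "g_space ((product_group S Gs)\<lparr>carrier := H\<rparr>) (subtopology (product_topology Ts S) H) X \<alpha>"
    and C: "\<forall>x\<in>topspace X. \<forall>W. openin X W \<and> x \<in> W \<longrightarrow>
       (\<exists>Ob V. openin (subtopology (product_topology Ts S') ((\<lambda>f. restrict f S') ` H)) Ob \<and>
          restrict (\<one>\<^bsub>product_group S Gs\<^esub>) S' \<in> Ob \<and> openin X V \<and> x \<in> V \<and>
          (\<forall>g\<in>H. restrict g S' \<in> Ob \<longrightarrow> (\<forall>y\<in>V. \<alpha> g y \<in> W)))"
  shows "\<forall>g\<in>H. restrict g S' = restrict (\<one>\<^bsub>product_group S Gs\<^esub>) S' \<longrightarrow> (\<forall>x\<in>topspace X. \<alpha> g x = x)"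
proof (intro ballI impI)
  fix g x assume g: "g \<in> H" and pg: "restrict g S' = restrict (\<one>\<^bsub>product_group S Gs\<^esub>) S'" and x: "x \<in> topspace X"
  have t1: "t1_space X" using gs by (simp add: g_space_def tychonoff_space_def)
  have gx: "\<alpha> g x \<in> topspace X" using gs_in[OF gs] g x by simp
  show "\<alpha> g x = x"
  proof (rule ccontr)
    assume ne: "\<alpha> g x \<noteq> x"
    then obtain W where W: "openin X W" "x \<in> W" "\<alpha> g x \<notin> W"
      using t1 x gx unfolding t1_space_def by metis
    then obtain Ob V where "restrict (\<one>\<^bsub>product_group S Gs\<^esub>) S' \<in> Ob" "x \<in> V"
          "\<forall>g\<in>H. restrict g S' \<in> Ob \<longrightarrow> (\<forall>y\<in>V. \<alpha> g y \<in> W)"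
      using C x by meson
    then have "\<alpha> g x \<in> W" using g pg by simp
    then show False using W by simp
  qed
qed


lemma (in group) conj_aux1: "h \<in> carrier G \<Longrightarrow> g \<in> carrier G \<Longrightarrow> (h \<otimes> ((inv h \<otimes> g) \<otimes> h)) \<otimes> inv h = g"
proof -
  assume a: "h \<in> carrier G" "g \<in> carrier G"
  then have "h \<otimes> ((inv h \<otimes> g) \<otimes> h) = g \<otimes> h" by (simp add: m_assoc[symmetric])
  then show ?thesis using a by (simp add: m_assoc)
qed

lemma (in group) conj_aux2: "h \<in> carrier G \<Longrightarrow> inv h \<otimes> \<one> \<otimes> h = \<one>"
  by simp

lemma case_a:
  fixes Tau :: "'k set"
    and S :: "'s set"
    and Gs :: "'s \<Rightarrow> ('g, 'c) monoid_scheme"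
    and Ts :: "'s \<Rightarrow> 'g topology"
    and H :: "('s \<Rightarrow> 'g) set"
    and X :: "'x topology"
    and \<alpha> :: "('s \<Rightarrow> 'g) \<Rightarrow> 'x \<Rightarrow> 'x"
  assumes inf: "infinite Tau"
    and tg: "\<forall>s\<in>S. topological_group (Gs s) (Ts s)"
    and sg: "subgroup H (product_group S Gs)"
    and gs: "g_space ((product_group S Gs)\<lparr>carrier := H\<rparr>) (subtopology (product_topology Ts S) H) X \<alpha>"
    and tr: "transitive_action ((product_group S Gs)\<lparr>carrier := H\<rparr>) X \<alpha>"
    and ch: "character_le X Tau"
  shows "\<exists>S'\<subseteq>S. S' \<lesssim> Tau \<and>
          (\<exists>\<gamma>. g_space ((product_group S' Gs)\<lparr>carrier := (\<lambda>f. restrict f S') ` H\<rparr>)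
                        (subtopology (product_topology Ts S') ((\<lambda>f. restrict f S') ` H)) X \<gamma> \<and>
               transitive_action ((product_group S' Gs)\<lparr>carrier := (\<lambda>f. restrict f S') ` H\<rparr>) X \<gamma> \<and>
               equivariant_pair
                 ((product_group S Gs)\<lparr>carrier := H\<rparr>) (subtopology (product_topology Ts S) H)
                 ((product_group S' Gs)\<lparr>carrier := (\<lambda>f. restrict f S') ` H\<rparr>)
                 (subtopology (product_topology Ts S') ((\<lambda>f. restrict f S') ` H))
                 X \<alpha> \<gamma> (\<lambda>f. restrict f S'))"
proof -
  let ?P = "product_group S Gs"
  let ?T = "subtopology (product_topology Ts S) H"
  have tsp: "topspace ?T = H" using gs by (simp add: g_space_def topological_group_def)
  have a1: "\<And>x. x \<in> topspace X \<Longrightarrow> \<alpha> \<one>\<^bsub>?P\<^esub> x = x" using gs by (simp add: g_space_def)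
  have a2: "\<And>g h x. g \<in> H \<Longrightarrow> h \<in> H \<Longrightarrow> x \<in> topspace X \<Longrightarrow> \<alpha> g (\<alpha> h x) = \<alpha> (g \<otimes>\<^bsub>?P\<^esub> h) x"
    using gs by (simp add: g_space_def)
  have ain: "\<And>g x. g \<in> H \<Longrightarrow> x \<in> topspace X \<Longrightarrow> \<alpha> g x \<in> topspace X"
    using gs_in[OF gs] by simp
  have acont: "continuous_map (prod_topology ?T X) X (\<lambda>p. \<alpha> (fst p) (snd p))"
    using gs by (simp add: g_space_def)
  have oneH: "\<one>\<^bsub>?P\<^esub> \<in> H" using sg subgroup.one_closed by blast
  have Hsub: "H \<subseteq> carrier ?P" using subgroup.subset[OF sg] .
  have gP: "group ?P" using pr_basic(1)[OF tg sg order_refl] .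
  interpret P: group ?P by (rule gP)
  have conclude: "?thesis" if S'S: "S' \<subseteq> S" and S'T: "S' \<lesssim> Tau" and
    C: "\<forall>x\<in>topspace X. \<forall>W. openin X W \<and> x \<in> W \<longrightarrow>
       (\<exists>Ob V. openin (subtopology (product_topology Ts S') ((\<lambda>f. restrict f S') ` H)) Ob \<and>
          restrict (\<one>\<^bsub>product_group S Gs\<^esub>) S' \<in> Ob \<and> openin X V \<and> x \<in> V \<and>
          (\<forall>g\<in>H. restrict g S' \<in> Ob \<longrightarrow> (\<forall>y\<in>V. \<alpha> g y \<in> W)))" for S'
  proof -
    obtain \<gamma> where \<gamma>: "g_space ((product_group S' Gs)\<lparr>carrier := (\<lambda>f. restrict f S') ` H\<rparr>) (subtopology (product_topology Ts S') ((\<lambda>f. restrict f S') ` H)) X \<gamma>"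
        "equivariant_pair ((product_group S Gs)\<lparr>carrier := H\<rparr>) ?T ((product_group S' Gs)\<lparr>carrier := (\<lambda>f. restrict f S') ` H\<rparr>) (subtopology (product_topology Ts S') ((\<lambda>f. restrict f S') ` H)) X \<alpha> \<gamma> (\<lambda>f. restrict f S')"
        and wd: "\<forall>g\<in>H. \<forall>x\<in>topspace X. \<gamma> (restrict g S') x = \<alpha> g x"
      using generic[OF tg sg gs S'S CK[OF gs C] C] by blast
    have "transitive_action ((product_group S' Gs)\<lparr>carrier := (\<lambda>f. restrict f S') ` H\<rparr>) X \<gamma>"
      unfolding transitive_action_def
    proof
      fix x assume x: "x \<in> topspace X"
      have "(\<lambda>p. \<gamma> p x) ` ((\<lambda>f. restrict f S') ` H) = (\<lambda>g. \<alpha> g x) ` H"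
        unfolding image_image using wd x by (auto intro!: image_cong)
      also have "\<dots> = topspace X" using tr x unfolding transitive_action_def by simp
      finally show "(\<lambda>p. \<gamma> p x) ` carrier ((product_group S' Gs)\<lparr>carrier := (\<lambda>f. restrict f S') ` H\<rparr>) = topspace X"
        by simp
    qed
    then show ?thesis using S'S S'T \<gamma> by blast
  qed
  show ?thesis
  proof (cases "topspace X = {}")
    case True
    show ?thesis
    proof (rule conclude[of "{}"])
      show "{} \<subseteq> S" by simp
      show "{} \<lesssim> Tau" by (rule empty_lepoll)
    qed (simp add: True)
  next
    case False
    then obtain x0 where x0: "x0 \<in> topspace X" by blast
    obtain B where B: "B \<lesssim> Tau" "\<forall>U\<in>B. openin X U \<and> x0 \<in> U"
        "\<forall>W. openin X W \<and> x0 \<in> W \<longrightarrow> (\<exists>U\<in>B. U \<subseteq> W)"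
    proof -
      have "\<exists>B. B \<lesssim> Tau \<and> (\<forall>U\<in>B. openin X U \<and> x0 \<in> U) \<and>
        (\<forall>W. openin X W \<and> x0 \<in> W \<longrightarrow> (\<exists>U\<in>B. U \<subseteq> W))"
        using ch x0 unfolding character_le_def by (rule bspec)
      then show ?thesis using that by blast
    qed
    have "\<forall>b\<in>B. \<exists>N V. openin ?T N \<and> openin X V \<and> \<one>\<^bsub>?P\<^esub> \<in> N \<and> x0 \<in> V \<and>
            N \<times> V \<subseteq> {z \<in> topspace (prod_topology ?T X). \<alpha> (fst z) (snd z) \<in> b}"
    proof
      fix b assume b: "b \<in> B"
      have "openin (prod_topology ?T X) {z \<in> topspace (prod_topology ?T X). \<alpha> (fst z) (snd z) \<in> b}"
        using openin_continuous_map_preimage[OF acont] B(2) b by blast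
      moreover have "(\<one>\<^bsub>?P\<^esub>, x0) \<in> {z \<in> topspace (prod_topology ?T X). \<alpha> (fst z) (snd z) \<in> b}"
        using x0 oneH tsp a1[OF x0] B(2) b by simp
      ultimately show "\<exists>N V. openin ?T N \<and> openin X V \<and> \<one>\<^bsub>?P\<^esub> \<in> N \<and> x0 \<in> V \<and>
            N \<times> V \<subseteq> {z \<in> topspace (prod_topology ?T X). \<alpha> (fst z) (snd z) \<in> b}"
        unfolding openin_prod_topology_alt by blast
    qed
    then have "\<exists>Nf. \<forall>b\<in>B. \<exists>V. openin ?T (Nf b) \<and> openin X V \<and> \<one>\<^bsub>?P\<^esub> \<in> Nf b \<and> x0 \<in> V \<and>
            Nf b \<times> V \<subseteq> {z \<in> topspace (prod_topology ?T X). \<alpha> (fst z) (snd z) \<in> b}"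
      by (rule bchoice)
    then obtain Nf where "\<forall>b\<in>B. \<exists>V. openin ?T (Nf b) \<and> openin X V \<and> \<one>\<^bsub>?P\<^esub> \<in> Nf b \<and> x0 \<in> V \<and>
            Nf b \<times> V \<subseteq> {z \<in> topspace (prod_topology ?T X). \<alpha> (fst z) (snd z) \<in> b}"
      by blast
    then have "\<exists>Vf. \<forall>b\<in>B. openin ?T (Nf b) \<and> openin X (Vf b) \<and> \<one>\<^bsub>?P\<^esub> \<in> Nf b \<and> x0 \<in> Vf b \<and>
            Nf b \<times> Vf b \<subseteq> {z \<in> topspace (prod_topology ?T X). \<alpha> (fst z) (snd z) \<in> b}"
      by (rule bchoice)
    then obtain Vf where NVB: "\<forall>b\<in>B. openin ?T (Nf b) \<and> openin X (Vf b) \<and> \<one>\<^bsub>?P\<^esub> \<in> Nf b \<and> x0 \<in> Vf b \<and>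
            Nf b \<times> Vf b \<subseteq> {z \<in> topspace (prod_topology ?T X). \<alpha> (fst z) (snd z) \<in> b}"
      by blast
    have NV: "\<And>b. b \<in> B \<Longrightarrow> openin ?T (Nf b) \<and> openin X (Vf b) \<and> \<one>\<^bsub>?P\<^esub> \<in> Nf b \<and> x0 \<in> Vf b \<and>
            Nf b \<times> Vf b \<subseteq> {z \<in> topspace (prod_topology ?T X). \<alpha> (fst z) (snd z) \<in> b}"
      by (rule bspec[OF NVB])
    have "\<forall>b\<in>B. \<exists>F. finite F \<and> F \<subseteq> S \<and> (\<forall>S'. F \<subseteq> S' \<and> S' \<subseteq> S \<longrightarrow>
       (\<exists>Ob. openin (subtopology (product_topology Ts S') ((\<lambda>f. restrict f S') ` H)) Ob \<and>
            restrict (\<one>\<^bsub>?P\<^esub>) S' \<in> Ob \<and>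
            (\<forall>g\<in>H. restrict g S' \<in> Ob \<longrightarrow> g \<in> Nf b)))"
    proof
      fix b assume b: "b \<in> B"
      show "\<exists>F. finite F \<and> F \<subseteq> S \<and> (\<forall>S'. F \<subseteq> S' \<and> S' \<subseteq> S \<longrightarrow>
       (\<exists>Ob. openin (subtopology (product_topology Ts S') ((\<lambda>f. restrict f S') ` H)) Ob \<and>
            restrict (\<one>\<^bsub>?P\<^esub>) S' \<in> Ob \<and>
            (\<forall>g\<in>H. restrict g S' \<in> Ob \<longrightarrow> g \<in> Nf b)))"
        using NV[OF b] by (intro determine[OF tg sg]) auto
    qed
    then have "\<exists>Ff. \<forall>b\<in>B. finite (Ff b) \<and> Ff b \<subseteq> S \<and> (\<forall>S'. Ff b \<subseteq> S' \<and> S' \<subseteq> S \<longrightarrow>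
       (\<exists>Ob. openin (subtopology (product_topology Ts S') ((\<lambda>f. restrict f S') ` H)) Ob \<and>
            restrict (\<one>\<^bsub>?P\<^esub>) S' \<in> Ob \<and>
            (\<forall>g\<in>H. restrict g S' \<in> Ob \<longrightarrow> g \<in> Nf b)))"
      by (rule bchoice)
    then obtain Ff where FfB: "\<forall>b\<in>B. finite (Ff b) \<and> Ff b \<subseteq> S \<and> (\<forall>S'. Ff b \<subseteq> S' \<and> S' \<subseteq> S \<longrightarrow>
       (\<exists>Ob. openin (subtopology (product_topology Ts S') ((\<lambda>f. restrict f S') ` H)) Ob \<and>
            restrict (\<one>\<^bsub>?P\<^esub>) S' \<in> Ob \<and>
            (\<forall>g\<in>H. restrict g S' \<in> Ob \<longrightarrow> g \<in> Nf b)))"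
      by blast
    have Ff: "\<And>b. b \<in> B \<Longrightarrow> finite (Ff b) \<and> Ff b \<subseteq> S \<and> (\<forall>S'. Ff b \<subseteq> S' \<and> S' \<subseteq> S \<longrightarrow>
       (\<exists>Ob. openin (subtopology (product_topology Ts S') ((\<lambda>f. restrict f S') ` H)) Ob \<and>
            restrict (\<one>\<^bsub>?P\<^esub>) S' \<in> Ob \<and>
            (\<forall>g\<in>H. restrict g S' \<in> Ob \<longrightarrow> g \<in> Nf b)))"
      by (rule bspec[OF FfB])
    define S' where "S' = (\<Union>b\<in>B. Ff b)"
    have S'S: "S' \<subseteq> S" unfolding S'_def using Ff by blast
    have S'T: "S' \<lesssim> Tau" unfolding S'_def using union_lepoll[OF inf B(1)] Ff by blast
    let ?pr = "\<lambda>f. restrict f S'"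
    let ?P' = "product_group S' Gs"
    let ?G' = "?P'\<lparr>carrier := ?pr ` H\<rparr>"
    let ?T' = "subtopology (product_topology Ts S') (?pr ` H)"
    have prm: "\<And>g h. ?pr (g \<otimes>\<^bsub>?P\<^esub> h) = ?pr g \<otimes>\<^bsub>?P'\<^esub> ?pr h" using pr_basic(3)[OF tg sg S'S] .
    have pr1: "?pr \<one>\<^bsub>?P\<^esub> = \<one>\<^bsub>?P'\<^esub>" using pr_basic(4)[OF tg sg S'S] .
    have prinv: "\<And>g. g \<in> carrier ?P \<Longrightarrow> ?pr (inv\<^bsub>?P\<^esub> g) = inv\<^bsub>?P'\<^esub> (?pr g)" using pr_basic(5)[OF tg sg S'S] .
    have sg': "subgroup (?pr ` H) ?P'" using pr_basic(6)[OF tg sg S'S] .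
    have tg': "topological_group ?G' ?T'" using pr_basic(7)[OF tg sg S'S] .
    have gP': "group ?P'" using pr_basic(2)[OF tg sg S'S] .
    interpret P': group ?P' by (rule gP')
    have tsp': "topspace ?T' = ?pr ` H" using tg' by (simp add: topological_group_def)
    have Obf: "\<exists>Ob. openin ?T' Ob \<and> ?pr \<one>\<^bsub>?P\<^esub> \<in> Ob \<and> (\<forall>g\<in>H. ?pr g \<in> Ob \<longrightarrow> g \<in> Nf b)" if b: "b \<in> B" for b
    proof -
      have "Ff b \<subseteq> S'" unfolding S'_def using b by blast
      then show ?thesis using Ff[OF b] S'S by blast
    qed
    have C: "\<exists>Ob V. openin ?T' Ob \<and> ?pr \<one>\<^bsub>?P\<^esub> \<in> Ob \<and> openin X V \<and> x \<in> V \<and>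
          (\<forall>g\<in>H. ?pr g \<in> Ob \<longrightarrow> (\<forall>y\<in>V. \<alpha> g y \<in> W))"
      if x: "x \<in> topspace X" and W: "openin X W" "x \<in> W" for x W
    proof -
      obtain h where h: "h \<in> H" and xh: "x = \<alpha> h x0"
        using tr x x0 unfolding transitive_action_def by auto
      have hc: "h \<in> carrier ?P" using h Hsub by blast
      have hi: "inv\<^bsub>?P\<^esub> h \<in> H" using sg h by (simp add: subgroup.m_inv_closed)
      define W0 where "W0 = {y \<in> topspace X. \<alpha> h y \<in> W}"
      have W0o: "openin X W0" unfolding W0_def
        using openin_continuous_map_preimage[OF gs_section[OF gs] W(1)] h by simp
      have x0W0: "x0 \<in> W0" unfolding W0_def using x0 xh W by simp
      obtain b where b: "b \<in> B" "b \<subseteq> W0" using B(3) W0o x0W0 by blast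
      obtain Ob where Ob: "openin ?T' Ob" "?pr \<one>\<^bsub>?P\<^esub> \<in> Ob" "\<forall>g\<in>H. ?pr g \<in> Ob \<longrightarrow> g \<in> Nf b"
        using Obf[OF b(1)] by blast
      have NVb: "openin X (Vf b)" "x0 \<in> Vf b"
          "Nf b \<times> Vf b \<subseteq> {z \<in> topspace (prod_topology ?T X). \<alpha> (fst z) (snd z) \<in> b}"
        using NV[OF b(1)] by auto
      define V where "V = {y \<in> topspace X. \<alpha> (inv\<^bsub>?P\<^esub> h) y \<in> Vf b}"
      have Vo: "openin X V" unfolding V_def
        using openin_continuous_map_preimage[OF gs_section[OF gs] NVb(1)] hi by simp
      have "\<alpha> (inv\<^bsub>?P\<^esub> h) x = x0"
        using xh a2[OF hi h x0] a1[OF x0] hc by simp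
      then have xV: "x \<in> V" unfolding V_def using x NVb(2) by simp
      let ?ph = "?pr h"
      have phc: "?ph \<in> carrier ?G'" using h by simp
      have iphc: "inv\<^bsub>?G'\<^esub> ?ph \<in> carrier ?G'"
      proof (rule group.inv_closed)
        show "group ?G'" using tg' unfolding topological_group_def by blast
      qed (rule phc)
      have iph: "inv\<^bsub>?G'\<^esub> ?ph = ?pr (inv\<^bsub>?P\<^esub> h)"
        using P'.m_inv_consistent[OF sg'] h prinv[OF hc] by simp
      define f where "f = (\<lambda>q. (inv\<^bsub>?G'\<^esub> ?ph \<otimes>\<^bsub>?G'\<^esub> q) \<otimes>\<^bsub>?G'\<^esub> ?ph)"
      have fc: "continuous_map ?T' ?T' f"
        unfolding f_def using continuous_map_compose[OF tg_left[OF tg' iphc] tg_right[OF tg' phc]]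
        by (simp add: o_def)
      define Ob' where "Ob' = {q \<in> topspace ?T'. f q \<in> Ob}"
      have Ob'o: "openin ?T' Ob'" unfolding Ob'_def using openin_continuous_map_preimage[OF fc Ob(1)] .
      have fpr: "f (?pr g) = ?pr (inv\<^bsub>?P\<^esub> h \<otimes>\<^bsub>?P\<^esub> g \<otimes>\<^bsub>?P\<^esub> h)" for g
        unfolding f_def iph using prm by simp
      have "?pr (inv\<^bsub>?P\<^esub> h \<otimes>\<^bsub>?P\<^esub> \<one>\<^bsub>?P\<^esub> \<otimes>\<^bsub>?P\<^esub> h) = ?pr \<one>\<^bsub>?P\<^esub>"
        using P.conj_aux2[OF hc] by simp
      then have oneOb': "?pr \<one>\<^bsub>?P\<^esub> \<in> Ob'" unfolding Ob'_def using fpr[of "\<one>\<^bsub>?P\<^esub>"] Ob(2) tsp' oneH by simp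
      have "\<forall>g\<in>H. ?pr g \<in> Ob' \<longrightarrow> (\<forall>y\<in>V. \<alpha> g y \<in> W)"
      proof (intro ballI impI)
        fix g y assume g: "g \<in> H" and pg: "?pr g \<in> Ob'" and y: "y \<in> V"
        have gc: "g \<in> carrier ?P" using g Hsub by blast
        define k where "k = inv\<^bsub>?P\<^esub> h \<otimes>\<^bsub>?P\<^esub> g \<otimes>\<^bsub>?P\<^esub> h"
        have kH: "k \<in> H" unfolding k_def using sg g h hi by (simp add: subgroup.m_closed)
        have "?pr k \<in> Ob" using pg fpr[of g] unfolding Ob'_def k_def by simp
        then have kN: "k \<in> Nf b" using Ob(3) kH by blast
        have yX: "y \<in> topspace X" using y unfolding V_def by simp
        define y' where "y' = \<alpha> (inv\<^bsub>?P\<^esub> h) y"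
        have y'V: "y' \<in> Vf b" using y unfolding V_def y'_def by simp
        have y'X: "y' \<in> topspace X" unfolding y'_def using ain[OF hi yX] .
        have "(k, y') \<in> Nf b \<times> Vf b" using kN y'V by blast
        then have "(k, y') \<in> {z \<in> topspace (prod_topology ?T X). \<alpha> (fst z) (snd z) \<in> b}"
          by (rule subsetD[OF NVb(3)])
        then have "\<alpha> k y' \<in> b" by simp
        then have "\<alpha> k y' \<in> W0" using b(2) by blast
        then have "\<alpha> h (\<alpha> k y') \<in> W" unfolding W0_def by simp
        moreover have "\<alpha> h (\<alpha> k y') = \<alpha> g y"
        proof -
          have "\<alpha> h (\<alpha> k y') = \<alpha> (h \<otimes>\<^bsub>?P\<^esub> k) y'" using a2[OF h kH y'X] .
          also have "\<dots> = \<alpha> (h \<otimes>\<^bsub>?P\<^esub> k) (\<alpha> (inv\<^bsub>?P\<^esub> h) y)" unfolding y'_def ..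
          also have "\<dots> = \<alpha> ((h \<otimes>\<^bsub>?P\<^esub> k) \<otimes>\<^bsub>?P\<^esub> inv\<^bsub>?P\<^esub> h) y"
            using a2[OF _ hi yX] h kH sg by (simp add: subgroup.m_closed)
          also have "(h \<otimes>\<^bsub>?P\<^esub> k) \<otimes>\<^bsub>?P\<^esub> inv\<^bsub>?P\<^esub> h = g"
            unfolding k_def by (rule P.conj_aux1[OF hc gc])
          finally show ?thesis .
        qed
        ultimately show "\<alpha> g y \<in> W" by simp
      qed
      then show ?thesis using Ob'o oneOb' Vo xV by blast
    qed
    show ?thesis by (rule conclude[OF S'S S'T]) (use C in blast)
  qed
qed


lemma case_b:
  fixes Tau :: "'k set"
    and S :: "'s set"
    and Gs :: "'s \<Rightarrow> ('g, 'c) monoid_scheme"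
    and Ts :: "'s \<Rightarrow> 'g topology"
    and H :: "('s \<Rightarrow> 'g) set"
    and X :: "'x topology"
    and \<alpha> :: "('s \<Rightarrow> 'g) \<Rightarrow> 'x \<Rightarrow> 'x"
    and \<U> :: "'x set set set"
  assumes inf: "infinite Tau"
    and tg: "\<forall>s\<in>S. topological_group (Gs s) (Ts s)"
    and sg: "subgroup H (product_group S Gs)"
    and gs: "g_space ((product_group S Gs)\<lparr>carrier := H\<rparr>) (subtopology (product_topology Ts S) H) X \<alpha>"
    and eu: "equiuniformity ((product_group S Gs)\<lparr>carrier := H\<rparr>) (subtopology (product_topology Ts S) H) X \<alpha> \<U>"
    and wt: "uniformity_weight_le \<U> Tau"
  shows "\<exists>S'\<subseteq>S. S' \<lesssim> Tau \<and>
          (\<exists>\<gamma>. g_space ((product_group S' Gs)\<lparr>carrier := (\<lambda>f. restrict f S') ` H\<rparr>)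
                        (subtopology (product_topology Ts S') ((\<lambda>f. restrict f S') ` H)) X \<gamma> \<and>
               equiuniformity ((product_group S' Gs)\<lparr>carrier := (\<lambda>f. restrict f S') ` H\<rparr>)
                        (subtopology (product_topology Ts S') ((\<lambda>f. restrict f S') ` H)) X \<gamma> \<U> \<and>
               equivariant_pair
                 ((product_group S Gs)\<lparr>carrier := H\<rparr>) (subtopology (product_topology Ts S) H)
                 ((product_group S' Gs)\<lparr>carrier := (\<lambda>f. restrict f S') ` H\<rparr>)
                 (subtopology (product_topology Ts S') ((\<lambda>f. restrict f S') ` H))
                 X \<alpha> \<gamma> (\<lambda>f. restrict f S'))"
proof -
  let ?P = "product_group S Gs"
  let ?T = "subtopology (product_topology Ts S) H"
  let ?act = "\<lambda>N V. {\<alpha> g y | g y. g \<in> N \<and> y \<in> V}"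
  have tsp: "topspace ?T = H" using gs by (simp add: g_space_def topological_group_def)
  have a1: "\<And>x. x \<in> topspace X \<Longrightarrow> \<alpha> \<one>\<^bsub>?P\<^esub> x = x" using gs by (simp add: g_space_def)
  obtain Bu where Bu: "Bu \<subseteq> \<U>" "Bu \<lesssim> Tau" "\<forall>u\<in>\<U>. \<exists>v\<in>Bu. refines v u"
    using wt unfolding uniformity_weight_le_def by blast
  have uo: "uniformity_on X \<U>" using eu by (simp add: equiuniformity_def)
  have uoc: "\<forall>u\<in>\<U>. open_cover X u" using uo by (simp add: uniformity_on_def)
  have e3: "\<forall>u\<in>\<U>. \<exists>N v. openin ?T N \<and> \<one>\<^bsub>?P\<lparr>carrier := H\<rparr>\<^esub> \<in> N \<and> v \<in> \<U> \<and> refines ((\<lambda>V. ?act N V) ` v) u"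
    using eu unfolding equiuniformity_def by (elim conjE)
  have "\<forall>u\<in>Bu. \<exists>N v. openin ?T N \<and> \<one>\<^bsub>?P\<^esub> \<in> N \<and> v \<in> \<U> \<and> refines ((\<lambda>V. ?act N V) ` v) u"
  proof
    fix u assume "u \<in> Bu"
    then have "u \<in> \<U>" using Bu(1) by blast
    with e3 have "\<exists>N v. openin ?T N \<and> \<one>\<^bsub>?P\<lparr>carrier := H\<rparr>\<^esub> \<in> N \<and> v \<in> \<U> \<and> refines ((\<lambda>V. ?act N V) ` v) u"
      by (rule bspec)
    then show "\<exists>N v. openin ?T N \<and> \<one>\<^bsub>?P\<^esub> \<in> N \<and> v \<in> \<U> \<and> refines ((\<lambda>V. ?act N V) ` v) u"
      by simp
  qed
  then have "\<exists>Nf. \<forall>u\<in>Bu. \<exists>v. openin ?T (Nf u) \<and> \<one>\<^bsub>?P\<^esub> \<in> Nf u \<and> v \<in> \<U> \<and> refines ((\<lambda>V. ?act (Nf u) V) ` v) u"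
    by (rule bchoice)
  then obtain Nf where "\<forall>u\<in>Bu. \<exists>v. openin ?T (Nf u) \<and> \<one>\<^bsub>?P\<^esub> \<in> Nf u \<and> v \<in> \<U> \<and> refines ((\<lambda>V. ?act (Nf u) V) ` v) u"
    by blast
  then have "\<exists>vf. \<forall>u\<in>Bu. openin ?T (Nf u) \<and> \<one>\<^bsub>?P\<^esub> \<in> Nf u \<and> vf u \<in> \<U> \<and> refines ((\<lambda>V. ?act (Nf u) V) ` (vf u)) u"
    by (rule bchoice)
  then obtain vf where NvB: "\<forall>u\<in>Bu. openin ?T (Nf u) \<and> \<one>\<^bsub>?P\<^esub> \<in> Nf u \<and> vf u \<in> \<U> \<and> refines ((\<lambda>V. ?act (Nf u) V) ` (vf u)) u"
    by blast
  have Nv: "\<And>u. u \<in> Bu \<Longrightarrow> openin ?T (Nf u) \<and> \<one>\<^bsub>?P\<^esub> \<in> Nf u \<and> vf u \<in> \<U> \<and>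
      refines ((\<lambda>V. ?act (Nf u) V) ` (vf u)) u"
    by (rule bspec[OF NvB])
  have vfU: "\<And>u. u \<in> Bu \<Longrightarrow> vf u \<in> \<U>" using Nv by simp
  have "\<forall>u\<in>Bu. \<exists>F. finite F \<and> F \<subseteq> S \<and> (\<forall>S'. F \<subseteq> S' \<and> S' \<subseteq> S \<longrightarrow>
     (\<exists>Ob. openin (subtopology (product_topology Ts S') ((\<lambda>f. restrict f S') ` H)) Ob \<and>
          restrict (\<one>\<^bsub>?P\<^esub>) S' \<in> Ob \<and>
          (\<forall>g\<in>H. restrict g S' \<in> Ob \<longrightarrow> g \<in> Nf u)))"
  proof
    fix u assume u: "u \<in> Bu"
    show "\<exists>F. finite F \<and> F \<subseteq> S \<and> (\<forall>S'. F \<subseteq> S' \<and> S' \<subseteq> S \<longrightarrow>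
     (\<exists>Ob. openin (subtopology (product_topology Ts S') ((\<lambda>f. restrict f S') ` H)) Ob \<and>
          restrict (\<one>\<^bsub>?P\<^esub>) S' \<in> Ob \<and>
          (\<forall>g\<in>H. restrict g S' \<in> Ob \<longrightarrow> g \<in> Nf u)))"
      using Nv[OF u] by (intro determine[OF tg sg]) auto
  qed
  then have "\<exists>Ff. \<forall>u\<in>Bu. finite (Ff u) \<and> Ff u \<subseteq> S \<and> (\<forall>S'. Ff u \<subseteq> S' \<and> S' \<subseteq> S \<longrightarrow>
     (\<exists>Ob. openin (subtopology (product_topology Ts S') ((\<lambda>f. restrict f S') ` H)) Ob \<and>
          restrict (\<one>\<^bsub>?P\<^esub>) S' \<in> Ob \<and>
          (\<forall>g\<in>H. restrict g S' \<in> Ob \<longrightarrow> g \<in> Nf u)))"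
    by (rule bchoice)
  then obtain Ff where FfB: "\<forall>u\<in>Bu. finite (Ff u) \<and> Ff u \<subseteq> S \<and> (\<forall>S'. Ff u \<subseteq> S' \<and> S' \<subseteq> S \<longrightarrow>
     (\<exists>Ob. openin (subtopology (product_topology Ts S') ((\<lambda>f. restrict f S') ` H)) Ob \<and>
          restrict (\<one>\<^bsub>?P\<^esub>) S' \<in> Ob \<and>
          (\<forall>g\<in>H. restrict g S' \<in> Ob \<longrightarrow> g \<in> Nf u)))"
    by blast
  have Ff: "\<And>u. u \<in> Bu \<Longrightarrow> finite (Ff u) \<and> Ff u \<subseteq> S \<and> (\<forall>S'. Ff u \<subseteq> S' \<and> S' \<subseteq> S \<longrightarrow>
     (\<exists>Ob. openin (subtopology (product_topology Ts S') ((\<lambda>f. restrict f S') ` H)) Ob \<and>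
          restrict (\<one>\<^bsub>?P\<^esub>) S' \<in> Ob \<and>
          (\<forall>g\<in>H. restrict g S' \<in> Ob \<longrightarrow> g \<in> Nf u)))"
    by (rule bspec[OF FfB])
  define S' where "S' = (\<Union>u\<in>Bu. Ff u)"
  have S'S: "S' \<subseteq> S" unfolding S'_def using Ff by blast
  have S'T: "S' \<lesssim> Tau" unfolding S'_def using union_lepoll[OF inf Bu(2)] Ff by blast
  let ?pr = "\<lambda>f. restrict f S'"
  let ?T' = "subtopology (product_topology Ts S') (?pr ` H)"
  have Obf: "\<exists>Ob. openin ?T' Ob \<and> ?pr \<one>\<^bsub>?P\<^esub> \<in> Ob \<and> (\<forall>g\<in>H. ?pr g \<in> Ob \<longrightarrow> g \<in> Nf u)" if u: "u \<in> Bu" for u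
  proof -
    have "Ff u \<subseteq> S'" unfolding S'_def using u by blast
    then show ?thesis using Ff[OF u] S'S by blast
  qed
  have key: "\<exists>Ob V. openin ?T' Ob \<and> ?pr \<one>\<^bsub>?P\<^esub> \<in> Ob \<and> openin X V \<and> x \<in> V \<and>
          (\<forall>g\<in>H. ?pr g \<in> Ob \<longrightarrow> (\<forall>y\<in>V. \<alpha> g y \<in> W))"
    if x: "x \<in> topspace X" and W: "openin X W" "x \<in> W" for x W
  proof -
    obtain u where u: "u \<in> \<U>" "star_of {x} u \<subseteq> W"
      using uo W unfolding uniformity_on_def by meson
    obtain u' where u': "u' \<in> Bu" "refines u' u" using Bu(3) u(1) by blast
    have ocv: "open_cover X (vf u')" using uoc vfU[OF u'(1)] by blast
    then obtain V where V: "V \<in> vf u'" "x \<in> V" using x unfolding open_cover_def by blast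
    have Vo: "openin X V" using ocv V unfolding open_cover_def by blast
    obtain Ob where Ob: "openin ?T' Ob" "?pr \<one>\<^bsub>?P\<^esub> \<in> Ob" "\<forall>g\<in>H. ?pr g \<in> Ob \<longrightarrow> g \<in> Nf u'"
      using Obf[OF u'(1)] by blast
    obtain U' where U': "U' \<in> u'" "?act (Nf u') V \<subseteq> U'" using Nv[OF u'(1)] V unfolding refines_def by blast
    obtain U where U: "U \<in> u" "U' \<subseteq> U" using u'(2) U'(1) unfolding refines_def by blast
    have "x \<in> ?act (Nf u') V" using a1[OF x] Nv[OF u'(1)] V by force
    then have "U \<inter> {x} \<noteq> {}" using U U' by blast
    then have UW: "U \<subseteq> W" using u(2) U(1) unfolding star_of_def by blast
    have "\<forall>g\<in>H. ?pr g \<in> Ob \<longrightarrow> (\<forall>y\<in>V. \<alpha> g y \<in> W)"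
    proof (intro ballI impI)
      fix g y assume g: "g \<in> H" "?pr g \<in> Ob" and y: "y \<in> V"
      have "\<alpha> g y \<in> ?act (Nf u') V" using Ob(3) g y by blast
      then show "\<alpha> g y \<in> W" using U' U UW by blast
    qed
    then show ?thesis using Ob(1,2) Vo V(2) by blast
  qed
  then have C: "\<forall>x\<in>topspace X. \<forall>W. openin X W \<and> x \<in> W \<longrightarrow>
       (\<exists>Ob V. openin ?T' Ob \<and> ?pr \<one>\<^bsub>?P\<^esub> \<in> Ob \<and> openin X V \<and> x \<in> V \<and>
          (\<forall>g\<in>H. ?pr g \<in> Ob \<longrightarrow> (\<forall>y\<in>V. \<alpha> g y \<in> W)))" by blast
  obtain \<gamma> where \<gamma>: "g_space ((product_group S' Gs)\<lparr>carrier := ?pr ` H\<rparr>) ?T' X \<gamma>"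
      "equivariant_pair ((product_group S Gs)\<lparr>carrier := H\<rparr>) ?T ((product_group S' Gs)\<lparr>carrier := ?pr ` H\<rparr>) ?T' X \<alpha> \<gamma> ?pr"
      and wd: "\<forall>g\<in>H. \<forall>x\<in>topspace X. \<gamma> (?pr g) x = \<alpha> g x"
    using generic[OF tg sg gs S'S CK[OF gs C] C] by blast
  have eu': "equiuniformity ((product_group S' Gs)\<lparr>carrier := ?pr ` H\<rparr>) ?T' X \<gamma> \<U>"
    unfolding equiuniformity_def
  proof (intro conjI ballI)
    show "uniformity_on X \<U>" by (rule uo)
    fix u assume u: "u \<in> \<U>"
    have ocv: "open_cover X u" using uoc u by blast
    { fix p assume "p \<in> carrier ((product_group S' Gs)\<lparr>carrier := ?pr ` H\<rparr>)"
      then obtain g where g: "g \<in> H" and pg: "p = ?pr g" by auto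
      have "(\<lambda>U. \<gamma> p ` U) ` u = (\<lambda>U. \<alpha> g ` U) ` u"
      proof (rule image_cong[OF refl])
        fix U assume "U \<in> u"
        then have "U \<subseteq> topspace X" using ocv unfolding open_cover_def using openin_subset by blast
        then show "\<gamma> p ` U = \<alpha> g ` U" using wd g pg by (auto intro!: image_cong)
      qed
      moreover have "(\<lambda>U. \<alpha> g ` U) ` u \<in> \<U>" using eu u g unfolding equiuniformity_def by simp
      ultimately show "(\<lambda>U. \<gamma> p ` U) ` u \<in> \<U>" by simp }
    obtain u' where u': "u' \<in> Bu" "refines u' u" using Bu(3) u by blast
    obtain Ob where Ob: "openin ?T' Ob" "?pr \<one>\<^bsub>?P\<^esub> \<in> Ob" "\<forall>g\<in>H. ?pr g \<in> Ob \<longrightarrow> g \<in> Nf u'"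
      using Obf[OF u'(1)] by blast
    have ocv': "open_cover X (vf u')" using uoc vfU[OF u'(1)] by blast
    have one': "\<one>\<^bsub>(product_group S' Gs)\<lparr>carrier := ?pr ` H\<rparr>\<^esub> = ?pr \<one>\<^bsub>?P\<^esub>"
      using pr_basic(4)[OF tg sg S'S] by simp
    have "refines ((\<lambda>V. {\<gamma> p y | p y. p \<in> Ob \<and> y \<in> V}) ` (vf u')) u"
      unfolding refines_def
    proof (intro ballI)
      fix Z assume "Z \<in> (\<lambda>V. {\<gamma> p y | p y. p \<in> Ob \<and> y \<in> V}) ` (vf u')"
      then obtain V where V: "V \<in> vf u'" and Z: "Z = {\<gamma> p y | p y. p \<in> Ob \<and> y \<in> V}" by blast
      have VX: "V \<subseteq> topspace X" using ocv' V unfolding open_cover_def using openin_subset by blast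
      obtain U' where U': "U' \<in> u'" "?act (Nf u') V \<subseteq> U'" using Nv[OF u'(1)] V unfolding refines_def by blast
      obtain U where U: "U \<in> u" "U' \<subseteq> U" using u'(2) U'(1) unfolding refines_def by blast
      have "Z \<subseteq> U"
      proof
        fix z assume "z \<in> Z"
        then obtain p y where z: "z = \<gamma> p y" "p \<in> Ob" "y \<in> V" using Z by blast
        have "p \<in> ?pr ` H" using z(2) openin_subset[OF Ob(1)] by auto
        then obtain g where g: "g \<in> H" and pg: "p = ?pr g" by blast
        have "z = \<alpha> g y" using z wd g pg VX by auto
        moreover have "g \<in> Nf u'" using Ob(3) g pg z(2) by blast
        ultimately have "z \<in> ?act (Nf u') V" using z(3) by blast
        then show "z \<in> U" using U U' by blast
      qed
      then show "\<exists>U\<in>u. Z \<subseteq> U" using U by blast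
    qed
    then show "\<exists>N v. openin ?T' N \<and> \<one>\<^bsub>(product_group S' Gs)\<lparr>carrier := ?pr ` H\<rparr>\<^esub> \<in> N \<and> v \<in> \<U> \<and>
        refines ((\<lambda>V. {\<gamma> g y | g y. g \<in> N \<and> y \<in> V}) ` v) u"
      using Ob(1,2) one' Nv[OF u'(1)] by auto
  qed
  show ?thesis using S'S S'T \<gamma> eu' by blast
qed

theorem proposition3p2:
  fixes Tau :: "'k set"
    and S :: "'s set"
    and Gs :: "'s \<Rightarrow> ('g, 'c) monoid_scheme"
    and Ts :: "'s \<Rightarrow> 'g topology"
    and H :: "('s \<Rightarrow> 'g) set"
    and X :: "'x topology"
    and \<alpha> :: "('s \<Rightarrow> 'g) \<Rightarrow> 'x \<Rightarrow> 'x"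
    and \<U> :: "'x set set set"
  assumes "infinite Tau"
    and "\<forall>s\<in>S. topological_group (Gs s) (Ts s)"
    and "subgroup H (product_group S Gs)"
    and "g_space ((product_group S Gs)\<lparr>carrier := H\<rparr>) (subtopology (product_topology Ts S) H) X \<alpha>"
  shows
    "(transitive_action ((product_group S Gs)\<lparr>carrier := H\<rparr>) X \<alpha> \<and> character_le X Tau \<longrightarrow>
       (\<exists>S'\<subseteq>S. S' \<lesssim> Tau \<and>
          (\<exists>\<gamma>. g_space ((product_group S' Gs)\<lparr>carrier := (\<lambda>f. restrict f S') ` H\<rparr>)
                        (subtopology (product_topology Ts S') ((\<lambda>f. restrict f S') ` H)) X \<gamma> \<and>
               transitive_action ((product_group S' Gs)\<lparr>carrier := (\<lambda>f. restrict f S') ` H\<rparr>) X \<gamma> \<and>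
               equivariant_pair
                 ((product_group S Gs)\<lparr>carrier := H\<rparr>) (subtopology (product_topology Ts S) H)
                 ((product_group S' Gs)\<lparr>carrier := (\<lambda>f. restrict f S') ` H\<rparr>)
                 (subtopology (product_topology Ts S') ((\<lambda>f. restrict f S') ` H))
                 X \<alpha> \<gamma> (\<lambda>f. restrict f S')))) \<and>
     (G_tychonoff TYPE('b) ((product_group S Gs)\<lparr>carrier := H\<rparr>) (subtopology (product_topology Ts S) H) X \<alpha> \<and>
      equiuniformity ((product_group S Gs)\<lparr>carrier := H\<rparr>) (subtopology (product_topology Ts S) H) X \<alpha> \<U> \<and>
      uniformity_weight_le \<U> Tau \<longrightarrow>
       (\<exists>S'\<subseteq>S. S' \<lesssim> Tau \<and>
          (\<exists>\<gamma>. g_space ((product_group S' Gs)\<lparr>carrier := (\<lambda>f. restrict f S') ` H\<rparr>)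
                        (subtopology (product_topology Ts S') ((\<lambda>f. restrict f S') ` H)) X \<gamma> \<and>
               equiuniformity ((product_group S' Gs)\<lparr>carrier := (\<lambda>f. restrict f S') ` H\<rparr>)
                        (subtopology (product_topology Ts S') ((\<lambda>f. restrict f S') ` H)) X \<gamma> \<U> \<and>
               equivariant_pair
                 ((product_group S Gs)\<lparr>carrier := H\<rparr>) (subtopology (product_topology Ts S) H)
                 ((product_group S' Gs)\<lparr>carrier := (\<lambda>f. restrict f S') ` H\<rparr>)
                 (subtopology (product_topology Ts S') ((\<lambda>f. restrict f S') ` H))
                 X \<alpha> \<gamma> (\<lambda>f. restrict f S'))))"
proof (intro conjI impI)
  assume "transitive_action ((product_group S Gs)\<lparr>carrier := H\<rparr>) X \<alpha> \<and> character_le X Tau"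
  then show "\<exists>S'\<subseteq>S. S' \<lesssim> Tau \<and>
          (\<exists>\<gamma>. g_space ((product_group S' Gs)\<lparr>carrier := (\<lambda>f. restrict f S') ` H\<rparr>)
                        (subtopology (product_topology Ts S') ((\<lambda>f. restrict f S') ` H)) X \<gamma> \<and>
               transitive_action ((product_group S' Gs)\<lparr>carrier := (\<lambda>f. restrict f S') ` H\<rparr>) X \<gamma> \<and>
               equivariant_pair
                 ((product_group S Gs)\<lparr>carrier := H\<rparr>) (subtopology (product_topology Ts S) H)
                 ((product_group S' Gs)\<lparr>carrier := (\<lambda>f. restrict f S') ` H\<rparr>)
                 (subtopology (product_topology Ts S') ((\<lambda>f. restrict f S') ` H))
                 X \<alpha> \<gamma> (\<lambda>f. restrict f S'))"
    using case_a[OF assms(1-4)] by blast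
next
  assume "G_tychonoff TYPE('b) ((product_group S Gs)\<lparr>carrier := H\<rparr>) (subtopology (product_topology Ts S) H) X \<alpha> \<and>
      equiuniformity ((product_group S Gs)\<lparr>carrier := H\<rparr>) (subtopology (product_topology Ts S) H) X \<alpha> \<U> \<and>
      uniformity_weight_le \<U> Tau"
  then show "\<exists>S'\<subseteq>S. S' \<lesssim> Tau \<and>
          (\<exists>\<gamma>. g_space ((product_group S' Gs)\<lparr>carrier := (\<lambda>f. restrict f S') ` H\<rparr>)
                        (subtopology (product_topology Ts S') ((\<lambda>f. restrict f S') ` H)) X \<gamma> \<and>
               equiuniformity ((product_group S' Gs)\<lparr>carrier := (\<lambda>f. restrict f S') ` H\<rparr>)
                        (subtopology (product_topology Ts S') ((\<lambda>f. restrict f S') ` H)) X \<gamma> \<U> \<and>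
               equivariant_pair
                 ((product_group S Gs)\<lparr>carrier := H\<rparr>) (subtopology (product_topology Ts S) H)
                 ((product_group S' Gs)\<lparr>carrier := (\<lambda>f. restrict f S') ` H\<rparr>)
                 (subtopology (product_topology Ts S') ((\<lambda>f. restrict f S') ` H))
                 X \<alpha> \<gamma> (\<lambda>f. restrict f S'))"
    using case_b[OF assms(1-4)] by blast
qed

end
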